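(* Let $m\ge n\ge k$ be positive integers, $A\in\mathbb{R}^{m\times n}$ with $A^TA=I_n$, $x^*\in\mathbb{R}^n$ with support $S^*$, $|S^*|\le k$, and $y=Ax^*$ (i.e. $e=0$). Then for every initialization $\mathcal{X}^0$ and $\eta>0$ of SEA, $B=\sup_{t\in\mathbb{N}}\|u^t-\eta A^T(Ax^t-y)\|_\infty=0$. As a consequence, for every such $x^*$, for the initialization $\mathcal{X}^0=0$ and every $\eta>0$, if SEA is run for $N>k+1$ iterations, then $S^*\subseteq S^{t_{BEST}}$ and $x^{t_{BEST}}=x^*$.
   Context: $S^*=\{i:x^*_i\neq0\}$. For $v\in\mathbb{R}^n$, $\mathrm{largest}_k(v)$ is the set of indices of the $k$ entries of $v$ with largest absolute value (ties broken by selecting the highest indices). For $S\subseteq\{1,\dots,n\}$, $A_S$ is the submatrix of columns indexed by $S$, $v_S$ the restriction of a vector to $S$, $A_S^\dagger$ the Moore–Penrose pseudoinverse of $A_S$. SEA with initialization $\mathcal{X}^0$ and step size $\eta$ generates, for $t=0,1,2,\dots$: $S^t=\mathrm{largest}_k(\mathcal{X}^t)$; $x^t_i=0$ for $i\notin S^t$ and $x^t_{S^t}=A_{S^t}^\dagger y$; $\mathcal{X}^{t+1}=\mathcal{X}^t-\eta A^T(Ax^t-y)$. When run for $N$ iterations (computing $x^0,\dots,x^{N-1}$), SEA outputs $x^{t_{BEST}}$ with $t_{BEST}\in\arg\min_{t'\in\{0,\dots,N-1\}}\|Ax^{t'}-y\|_2$. The oracle direction is $u^t_i=-\eta x^*_i$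 if $i\in S^*\setminus S^t$ and $u^t_i=0$ otherwise. *)

theory Defs
  imports Complex_Main "Jordan_Normal_Form.Matrix"
begin

text \<open>Vectors/matrices are Jordan_Normal_Form vec/mat; indices are 0-based,
  i.e. index i here corresponds to index i+1 in the paper.\<close>

definition supp_vec :: "real vec \<Rightarrow> nat set" where
  "supp_vec v = {i. i < dim_vec v \<and> v $ i \<noteq> 0}"

definition norm2_vec :: "real vec \<Rightarrow> real" where
  "norm2_vec v = sqrt (\<Sum>i<dim_vec v. (v $ i)^2)"

definition norminf_vec :: "real vec \<Rightarrow> real" where
  "norminf_vec v = Max (insert 0 {\<bar>v $ i\<bar> | i. i < dim_vec v})"

definition largest_k :: "nat \<Rightarrow> real vec \<Rightarrow> nat set" where
  "largest_k k v = {i. i < dim_vec v \<and>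
     card {j. j < dim_vec v \<and> (\<bar>v $ j\<bar> > \<bar>v $ i\<bar> \<or> (\<bar>v $ j\<bar> = \<bar>v $ i\<bar> \<and> j > i))} < k}"

definition pinv :: "real mat \<Rightarrow> real mat" where
  "pinv M = (THE B. B \<in> carrier_mat (dim_col M) (dim_row M) \<and>
      M * B * M = M \<and> B * M * B = B \<and>
      transpose_mat (M * B) = M * B \<and> transpose_mat (B * M) = B * M)"

definition sub_cols :: "real mat \<Rightarrow> nat set \<Rightarrow> real mat" where
  "sub_cols A S = mat_of_cols (dim_row A) (map (col A) (sorted_list_of_set S))"

definition pinv_sol :: "real mat \<Rightarrow> nat set \<Rightarrow> real vec \<Rightarrow> real vec" where
  "pinv_sol A S y = vec (dim_col A)
     (\<lambda>i. if i \<in> S then (pinv (sub_cols A S) *\<^sub>v y) $ card {j \<in> S. j < i} else 0)"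

primrec sea_X :: "real mat \<Rightarrow> real vec \<Rightarrow> nat \<Rightarrow> real \<Rightarrow> real vec \<Rightarrow> nat \<Rightarrow> real vec" where
  "sea_X A y k \<eta> X0 0 = X0"
| "sea_X A y k \<eta> X0 (Suc t) =
     (let X = sea_X A y k \<eta> X0 t; x = pinv_sol A (largest_k k X) y
      in X - \<eta> \<cdot>\<^sub>v (transpose_mat A *\<^sub>v (A *\<^sub>v x - y)))"

definition sea_S :: "real mat \<Rightarrow> real vec \<Rightarrow> nat \<Rightarrow> real \<Rightarrow> real vec \<Rightarrow> nat \<Rightarrow> nat set" where
  "sea_S A y k \<eta> X0 t = largest_k k (sea_X A y k \<eta> X0 t)"

definition sea_x :: "real mat \<Rightarrow> real vec \<Rightarrow> nat \<Rightarrow> real \<Rightarrow> real vec \<Rightarrow> nat \<Rightarrow> real vec" where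
  "sea_x A y k \<eta> X0 t = pinv_sol A (sea_S A y k \<eta> X0 t) y"

definition oracle_u :: "real mat \<Rightarrow> real vec \<Rightarrow> real vec \<Rightarrow> nat \<Rightarrow> real \<Rightarrow> real vec \<Rightarrow> nat \<Rightarrow> real vec" where
  "oracle_u A xs y k \<eta> X0 t = vec (dim_vec xs)
     (\<lambda>i. if i \<in> supp_vec xs \<and> i \<notin> sea_S A y k \<eta> X0 t then - \<eta> * xs $ i else 0)"

end

theory Submission imports Defs begin
lemma sorted_nth_card:
  fixes S :: "nat set"
  assumes "finite S" "i \<in> S"
  shows "card {j\<in>S. j < i} < card S \<and> sorted_list_of_set S ! card {j\<in>S. j < i} = i"
proof -
  let ?l = "sorted_list_of_set S"
  have sl: "sorted ?l" "distinct ?l" "set ?l = S" using assms by auto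
  obtain p where p: "p < length ?l" "?l ! p = i" using assms sl(3) by (metis in_set_conv_nth)
  have "{j\<in>S. j < i} = (\<lambda>q. ?l ! q) ` {..<p}"
  proof
    show "{j\<in>S. j < i} \<subseteq> (\<lambda>q. ?l ! q) ` {..<p}"
    proof
      fix j assume j: "j \<in> {j\<in>S. j < i}"
      then obtain q where q: "q < length ?l" "?l ! q = j" using sl(3) by (metis (no_types, lifting) in_set_conv_nth mem_Collect_eq)
      have "q < p"
      proof (rule ccontr)
        assume "\<not> q < p" then have "p \<le> q" by simp
        then have "?l ! p \<le> ?l ! q" using sl(1) q(1) by (simp add: sorted_nth_mono)
        then show False using j p q by auto
      qed
      then show "j \<in> (\<lambda>q. ?l ! q) ` {..<p}" using q by auto
    qed
  next
    show "(\<lambda>q. ?l ! q) ` {..<p} \<subseteq> {j\<in>S. j < i}"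
    proof
      fix j assume "j \<in> (\<lambda>q. ?l ! q) ` {..<p}"
      then obtain q where q: "q < p" "j = ?l ! q" by auto
      have "?l ! q \<le> ?l ! p" using sorted_nth_mono[OF sl(1), of q p] q p by simp
      moreover have "?l ! q \<noteq> ?l ! p" using nth_eq_iff_index_eq[OF sl(2), of q p] q p by auto
      moreover have "?l ! q \<in> S" using sl(3) q p by auto
      ultimately show "j \<in> {j\<in>S. j < i}" using q p by auto
    qed
  qed
  moreover have "inj_on (\<lambda>q. ?l ! q) {..<p}" using sl(2) p(1)
    by (auto simp: inj_on_def nth_eq_iff_index_eq)
  ultimately have "card {j\<in>S. j < i} = p" by (simp add: card_image)
  then show ?thesis using p sl by (metis distinct_card)
qed

lemma sub_cols_carrier:
  assumes "finite S"
  shows "sub_cols A S \<in> carrier_mat (dim_row A) (card S)"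
  unfolding sub_cols_def using assms by auto

lemma col_sub_cols:
  assumes "finite S" "q < card S"
  shows "col (sub_cols A S) q = col A (sorted_list_of_set S ! q)"
  unfolding sub_cols_def using assms by (subst col_mat_of_cols) auto

lemma sub_cols_orth:
  fixes A :: "real mat"
  assumes A: "A \<in> carrier_mat m n" and O: "transpose_mat A * A = 1\<^sub>m n" and S: "S \<subseteq> {..<n}"
  shows "transpose_mat (sub_cols A S) * sub_cols A S = 1\<^sub>m (card S)"
proof -
  have fin: "finite S" using S finite_subset by blast
  let ?l = "sorted_list_of_set S"
  have len: "length ?l = card S" using fin by simp
  have inS: "q < card S \<Longrightarrow> ?l ! q < n" for q using S fin len
    by (metis lessThan_iff nth_mem set_sorted_list_of_set subsetD)
  show ?thesis
  proof (rule eq_matI)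
    fix i j assume ij: "i < dim_row (1\<^sub>m (card S))" "j < dim_col (1\<^sub>m (card S))"
    then have i: "i < card S" and j: "j < card S" by auto
    have "(transpose_mat (sub_cols A S) * sub_cols A S) $$ (i,j)
        = col A (?l ! i) \<bullet> col A (?l ! j)"
      using i j fin sub_cols_carrier[OF fin, of A] A by (simp add: row_transpose col_sub_cols)
    also have "\<dots> = (transpose_mat A * A) $$ (?l ! i, ?l ! j)"
      using inS[OF i] inS[OF j] A by auto
    also have "\<dots> = (if i = j then 1 else 0)"
      using O inS[OF i] inS[OF j] i j len fin
      by (simp add: nth_eq_iff_index_eq)
    finally show "(transpose_mat (sub_cols A S) * sub_cols A S) $$ (i,j) = 1\<^sub>m (card S) $$ (i,j)"
      using i j by simp
  qed (use fin sub_cols_carrier[OF fin, of A] in auto)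
qed


lemma pinv_orth:
  fixes M :: "real mat"
  assumes M: "M \<in> carrier_mat a b" and O: "transpose_mat M * M = 1\<^sub>m b"
  shows "pinv M = transpose_mat M"
  unfolding pinv_def
proof (rule the_equality)
  have T: "transpose_mat M \<in> carrier_mat b a" using M by auto
  show "transpose_mat M \<in> carrier_mat (dim_col M) (dim_row M) \<and>
    M * transpose_mat M * M = M \<and> transpose_mat M * M * transpose_mat M = transpose_mat M \<and>
    transpose_mat (M * transpose_mat M) = M * transpose_mat M \<and>
    transpose_mat (transpose_mat M * M) = transpose_mat M * M"
    using M T O by (auto simp: transpose_mult[OF M T] assoc_mult_mat[OF M T M])
next
  fix B assume B: "B \<in> carrier_mat (dim_col M) (dim_row M) \<and>
      M * B * M = M \<and> B * M * B = B \<and>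
      transpose_mat (M * B) = M * B \<and> transpose_mat (B * M) = B * M"
  then have Bc: "B \<in> carrier_mat b a" using M by auto
  have "transpose_mat M = transpose_mat (M * B * M)" using B by simp
  also have "\<dots> = transpose_mat M * transpose_mat (M * B)"
    using M Bc by (metis mult_carrier_mat transpose_mult)
  also have "\<dots> = transpose_mat M * (M * B)" using B by simp
  also have "\<dots> = (transpose_mat M * M) * B" using M Bc by (metis assoc_mult_mat carrier_matI index_transpose_mat(2,3) carrier_matD)
  also have "\<dots> = B" using O Bc by simp
  finally show "B = transpose_mat M" by simp
qed

lemma ATA_vec:
  fixes A :: "real mat"
  assumes A: "A \<in> carrier_mat m n" and O: "transpose_mat A * A = 1\<^sub>m n" and v: "v \<in> carrier_vec n"
  shows "transpose_mat A *\<^sub>v (A *\<^sub>v v) = v"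
proof -
  have "transpose_mat A *\<^sub>v (A *\<^sub>v v) = (transpose_mat A * A) *\<^sub>v v"
    using A v by (metis assoc_mult_mat_vec transpose_carrier_mat)
  then show ?thesis using O v by simp
qed

lemma grad_eq:
  fixes A :: "real mat"
  assumes A: "A \<in> carrier_mat m n" and O: "transpose_mat A * A = 1\<^sub>m n"
    and v: "v \<in> carrier_vec n" and w: "w \<in> carrier_vec n"
  shows "transpose_mat A *\<^sub>v (A *\<^sub>v v - A *\<^sub>v w) = v - w"
  using ATA_vec[OF A O, of "v - w"] mult_minus_distrib_mat_vec[OF A v w] v w by simp

lemma pinv_sol_eq:
  fixes A :: "real mat"
  assumes A: "A \<in> carrier_mat m n" and O: "transpose_mat A * A = 1\<^sub>m n" and S: "S \<subseteq> {..<n}"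
    and xs: "xs \<in> carrier_vec n"
  shows "pinv_sol A S (A *\<^sub>v xs) = vec n (\<lambda>i. if i \<in> S then xs $ i else 0)"
proof -
  have fin: "finite S" using S finite_subset by blast
  have SC: "sub_cols A S \<in> carrier_mat m (card S)" using sub_cols_carrier[OF fin, of A] A by simp
  have P: "pinv (sub_cols A S) = transpose_mat (sub_cols A S)"
    by (rule pinv_orth[OF SC sub_cols_orth[OF A O S]])
  have key: "(transpose_mat (sub_cols A S) *\<^sub>v (A *\<^sub>v xs)) $ card {j\<in>S. j < i} = xs $ i"
    if i: "i \<in> S" for i
  proof -
    note c = sorted_nth_card[OF fin i]
    have iN: "i < n" using S i by auto
    have "(transpose_mat (sub_cols A S) *\<^sub>v (A *\<^sub>v xs)) $ card {j\<in>S. j < i}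
        = col A i \<bullet> (A *\<^sub>v xs)"
      using c SC by (simp add: col_sub_cols[OF fin])
    also have "\<dots> = (transpose_mat A *\<^sub>v (A *\<^sub>v xs)) $ i" using A iN by simp
    also have "\<dots> = xs $ i" using ATA_vec[OF A O xs] by simp
    finally show ?thesis .
  qed
  show ?thesis unfolding pinv_sol_def P using A key by (intro eq_vecI) auto
qed

lemma largest_k_sub: "largest_k k X \<subseteq> {..<dim_vec X}"
  unfolding largest_k_def by auto

lemma largest_k_nz:
  assumes i: "i < dim_vec X" "X $ i \<noteq> 0" and c: "card {j. j < dim_vec X \<and> X $ j \<noteq> 0} \<le> k"
  shows "i \<in> largest_k k X"
proof -
  let ?B = "{j. j < dim_vec X \<and> (\<bar>X $ j\<bar> > \<bar>X $ i\<bar> \<or> (\<bar>X $ j\<bar> = \<bar>X $ i\<bar> \<and> j > i))}"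
  let ?N = "{j. j < dim_vec X \<and> X $ j \<noteq> 0}"
  have "?B \<subseteq> ?N - {i}" using i by auto
  moreover have "finite ?N" by auto
  ultimately have "card ?B \<le> card (?N - {i})" by (meson card_mono finite_Diff)
  also have "\<dots> < card ?N" using i by (intro card_Diff1_less) auto
  finally show ?thesis unfolding largest_k_def using i c by auto
qed

context
  fixes A :: "real mat" and xs :: "real vec" and m n k :: nat and X0 :: "real vec" and \<eta> :: real
  assumes A: "A \<in> carrier_mat m n" and O: "transpose_mat A * A = 1\<^sub>m n"
    and xs: "xs \<in> carrier_vec n" and X0: "X0 \<in> carrier_vec n"
  and eta_pos: "\<eta> > 0"
begin

abbreviation "XX t \<equiv> sea_X A (A *\<^sub>v xs) k \<eta> X0 t"
abbreviation "SS t \<equiv> sea_S A (A *\<^sub>v xs) k \<eta> X0 t"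
abbreviation "xx t \<equiv> sea_x A (A *\<^sub>v xs) k \<eta> X0 t"

lemma XX_suc: "XX (Suc t) = XX t - \<eta> \<cdot>\<^sub>v (transpose_mat A *\<^sub>v (A *\<^sub>v xx t - A *\<^sub>v xs))"
  unfolding sea_X.simps sea_x_def sea_S_def Let_def ..

lemma XX_carrier: "XX t \<in> carrier_vec n"
proof (induction t)
  case 0 then show ?case using X0 by simp
next
  case (Suc t)
  show ?case using A unfolding XX_suc carrier_vec_def by (simp only: index_minus_vec index_smult_vec dim_mult_mat_vec index_transpose_mat carrier_matD mem_Collect_eq)
qed

lemma SS_sub: "SS t \<subseteq> {..<n}"
  using largest_k_sub[of k "XX t"] XX_carrier[of t] unfolding sea_S_def by auto

lemma xx_eq: "xx t = vec n (\<lambda>i. if i \<in> SS t then xs $ i else 0)"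
  unfolding sea_x_def by (rule pinv_sol_eq[OF A O SS_sub xs])

lemma grad_t: "transpose_mat A *\<^sub>v (A *\<^sub>v xx t - A *\<^sub>v xs) = vec n (\<lambda>i. if i \<in> SS t then 0 else - xs $ i)"
proof -
  have "transpose_mat A *\<^sub>v (A *\<^sub>v xx t - A *\<^sub>v xs) = xx t - xs"
    by (rule grad_eq[OF A O _ xs]) (simp add: xx_eq)
  then show ?thesis using xs by (intro eq_vecI) (auto simp: xx_eq)
qed

lemma part1_zero:
  "oracle_u A xs (A *\<^sub>v xs) k \<eta> X0 t - \<eta> \<cdot>\<^sub>v (transpose_mat A *\<^sub>v (A *\<^sub>v xx t - A *\<^sub>v xs)) = 0\<^sub>v n"
  unfolding grad_t oracle_u_def using xs by (intro eq_vecI) (simp_all add: supp_vec_def)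

lemma XX_suc': "XX (Suc t) = XX t + vec n (\<lambda>i. if i \<in> SS t then 0 else \<eta> * xs $ i)"
  unfolding XX_suc grad_t using XX_carrier[of t] by (intro eq_vecI) (simp_all add: carrier_vecD)


lemma XX_inv:
  assumes "X0 = 0\<^sub>v n"
  shows "i < n \<Longrightarrow> \<exists>r\<ge>0. XX t $ i = r * xs $ i"
proof (induction t)
  case 0 then show ?case using assms by (intro exI[of _ 0]) simp
next
  case (Suc t)
  then obtain r where r: "r \<ge> 0" "XX t $ i = r * xs $ i" by blast
  have "XX (Suc t) $ i = (r + (if i \<in> SS t then 0 else \<eta>)) * xs $ i"
    unfolding XX_suc' using Suc.prems r(2) XX_carrier[of t] by (simp add: carrier_vecD algebra_simps)
  moreover have "r + (if i \<in> SS t then 0 else \<eta>) \<ge> 0" using r(1) eta_pos by simp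
  ultimately show ?case by blast
qed


definition "ZZ t = {i \<in> supp_vec xs. XX t $ i = 0}"

lemma ZZ_fin: "finite (ZZ t)"
  unfolding ZZ_def supp_vec_def by auto

lemma ZZ_mono:
  assumes "X0 = 0\<^sub>v n"
  shows "ZZ (Suc t) \<subseteq> ZZ t"
proof
  fix i assume i: "i \<in> ZZ (Suc t)"
  then have iS: "i \<in> supp_vec xs" and z: "XX (Suc t) $ i = 0" unfolding ZZ_def by auto
  have iN: "i < n" using iS xs unfolding supp_vec_def by auto
  obtain r where r: "r \<ge> 0" "XX t $ i = r * xs $ i" using XX_inv[OF assms iN] by blast
  have "XX (Suc t) $ i = (r + (if i \<in> SS t then 0 else \<eta>)) * xs $ i"
    unfolding XX_suc' using iN r(2) XX_carrier[of t] by (simp add: carrier_vecD algebra_simps)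
  moreover have "xs $ i \<noteq> 0" using iS unfolding supp_vec_def by auto
  ultimately have "r + (if i \<in> SS t then 0 else \<eta>) = 0" using z by simp
  then have "r = 0" using r(1) eta_pos by (auto split: if_splits)
  then show "i \<in> ZZ t" using iS r(2) unfolding ZZ_def by simp
qed

lemma NZ_sel:
  assumes "X0 = 0\<^sub>v n" and card: "card (supp_vec xs) \<le> k"
    and i: "i < n" "XX t $ i \<noteq> 0"
  shows "i \<in> SS t"
proof -
  have dim: "dim_vec (XX t) = n" using XX_carrier[of t] by (simp add: carrier_vecD)
  have sub: "{j. j < dim_vec (XX t) \<and> XX t $ j \<noteq> 0} \<subseteq> supp_vec xs"
  proof
    fix j assume "j \<in> {j. j < dim_vec (XX t) \<and> XX t $ j \<noteq> 0}"
    then have j: "j < n" "XX t $ j \<noteq> 0" using dim by auto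
    obtain r where "XX t $ j = r * xs $ j" using XX_inv[OF assms(1) j(1)] by blast
    then show "j \<in> supp_vec xs" using j xs unfolding supp_vec_def by auto
  qed
  have "finite (supp_vec xs)" unfolding supp_vec_def by auto
  then have "card {j. j < dim_vec (XX t) \<and> XX t $ j \<noteq> 0} \<le> k"
    using card_mono[OF _ sub] card by linarith
  then show ?thesis unfolding sea_S_def using largest_k_nz[of i "XX t" k] i dim by simp
qed

lemma ZZ_strict:
  assumes "X0 = 0\<^sub>v n" and card: "card (supp_vec xs) \<le> k"
    and ns: "\<not> supp_vec xs \<subseteq> SS t"
  shows "card (ZZ (Suc t)) < card (ZZ t)"
proof -
  obtain i where iS: "i \<in> supp_vec xs" and iT: "i \<notin> SS t" using ns by blast
  have iN: "i < n" using iS xs unfolding supp_vec_def by auto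
  have z: "XX t $ i = 0" using NZ_sel[OF assms(1) card iN] iT by blast
  have "XX (Suc t) $ i = \<eta> * xs $ i"
    unfolding XX_suc' using iN z iT XX_carrier[of t] by (simp add: carrier_vecD)
  moreover have "xs $ i \<noteq> 0" using iS unfolding supp_vec_def by auto
  ultimately have "XX (Suc t) $ i \<noteq> 0" using eta_pos by simp
  then have "i \<in> ZZ t - ZZ (Suc t)" using iS z unfolding ZZ_def by auto
  then have "ZZ (Suc t) \<subset> ZZ t" using ZZ_mono[OF assms(1)] by blast
  then show ?thesis using ZZ_fin by (simp add: psubset_card_mono)
qed

lemma ZZ_empty:
  assumes "X0 = 0\<^sub>v n" and card: "card (supp_vec xs) \<le> k" and e: "ZZ t = {}"
  shows "supp_vec xs \<subseteq> SS t"
proof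
  fix i assume iS: "i \<in> supp_vec xs"
  have iN: "i < n" using iS xs unfolding supp_vec_def by auto
  have "XX t $ i \<noteq> 0" using e iS unfolding ZZ_def by auto
  then show "i \<in> SS t" using NZ_sel[OF assms(1) card iN] by blast
qed

lemma reach:
  assumes "X0 = 0\<^sub>v n" and card: "card (supp_vec xs) \<le> k"
  shows "(\<exists>s\<le>t. supp_vec xs \<subseteq> SS s) \<or> card (ZZ t) + t \<le> k"
proof (induction t)
  case 0
  have "ZZ 0 \<subseteq> supp_vec xs" unfolding ZZ_def by auto
  moreover have "finite (supp_vec xs)" unfolding supp_vec_def by auto
  ultimately have "card (ZZ 0) \<le> k" using card card_mono by (metis le_trans)
  then show ?case by simp
next
  case (Suc t)
  show ?case
  proof (cases "\<exists>s\<le>t. supp_vec xs \<subseteq> SS s")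
    case True then show ?thesis using le_Suc_eq by blast
  next
    case False
    then have h: "card (ZZ t) + t \<le> k" "\<not> supp_vec xs \<subseteq> SS t" using Suc.IH by auto
    then show ?thesis using ZZ_strict[OF assms h(2)] by simp
  qed
qed

lemma reach_k:
  assumes "X0 = 0\<^sub>v n" and card: "card (supp_vec xs) \<le> k"
  shows "\<exists>s\<le>k. supp_vec xs \<subseteq> SS s"
proof -
  from reach[OF assms, of k] show ?thesis
  proof
    assume "card (ZZ k) + k \<le> k"
    then have "ZZ k = {}" using ZZ_fin[of k] by simp
    then show ?thesis using ZZ_empty[OF assms] by blast
  qed
qed

end

lemma norm2_zero:
  assumes "norm2_vec v \<le> 0"
  shows "v = 0\<^sub>v (dim_vec v)"
proof -
  have "sqrt (\<Sum>i<dim_vec v. (v $ i)^2) \<le> 0" using assms unfolding norm2_vec_def .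
  then have "(\<Sum>i<dim_vec v. (v $ i)^2) \<le> 0" by simp
  moreover have "(\<Sum>i<dim_vec v. (v $ i)^2) \<ge> 0" by (simp add: sum_nonneg)
  ultimately have "(\<Sum>i<dim_vec v. (v $ i)^2) = 0" by linarith
  then have "\<forall>i\<in>{..<dim_vec v}. (v $ i)^2 = 0" by (subst (asm) sum_nonneg_eq_0_iff) auto
  then show ?thesis by (intro eq_vecI) auto
qed

lemma norm2_zero_vec: "norm2_vec (0\<^sub>v m) = 0"
  unfolding norm2_vec_def by simp

lemma norminf_zero_vec: "norminf_vec (0\<^sub>v n) = 0"
proof -
  have h: "insert 0 {\<bar>0\<^sub>v n $ i\<bar> | i. i < dim_vec (0\<^sub>v n)} = {0::real}" by auto
  show ?thesis unfolding norminf_vec_def by (subst h) simp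
qed

theorem corollaryC7:
  fixes A :: "real mat" and xs y :: "real vec" and m n k :: nat
  assumes "0 < k" and "k \<le> n" and "n \<le> m"
    and "A \<in> carrier_mat m n"
    and "transpose_mat A * A = 1\<^sub>m n"
    and "xs \<in> carrier_vec n"
    and "card (supp_vec xs) \<le> k"
    and "y = A *\<^sub>v xs"
  shows "(\<forall>X0 \<eta>. X0 \<in> carrier_vec n \<longrightarrow> \<eta> > 0 \<longrightarrow>
            (SUP t. norminf_vec (oracle_u A xs y k \<eta> X0 t
               - \<eta> \<cdot>\<^sub>v (transpose_mat A *\<^sub>v (A *\<^sub>v sea_x A y k \<eta> X0 t - y)))) = 0)
       \<and> (\<forall>\<eta> N tb. \<eta> > 0 \<longrightarrow> N > k + 1 \<longrightarrow> tb < N \<longrightarrow>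
            (\<forall>t'<N. norm2_vec (A *\<^sub>v sea_x A y k \<eta> (0\<^sub>v n) tb - y)
                     \<le> norm2_vec (A *\<^sub>v sea_x A y k \<eta> (0\<^sub>v n) t' - y)) \<longrightarrow>
            supp_vec xs \<subseteq> sea_S A y k \<eta> (0\<^sub>v n) tb
            \<and> sea_x A y k \<eta> (0\<^sub>v n) tb = xs)"
proof (intro conjI allI impI)
  note A = assms(4) and O = assms(5) and xs = assms(6) and card = assms(7) and y = assms(8)
  fix X0 :: "real vec" and \<eta> :: real
  assume X0: "X0 \<in> carrier_vec n" and eta: "\<eta> > 0"
  show "(SUP t. norminf_vec (oracle_u A xs y k \<eta> X0 t
               - \<eta> \<cdot>\<^sub>v (transpose_mat A *\<^sub>v (A *\<^sub>v sea_x A y k \<eta> X0 t - y)))) = 0"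
    unfolding y part1_zero[OF A O xs X0 eta] norminf_zero_vec by simp
next
  note A = assms(4) and O = assms(5) and xs = assms(6) and card = assms(7) and y = assms(8)
  fix \<eta> :: real and N tb :: nat
  assume eta: "\<eta> > 0" and N: "N > k + 1" and tb: "tb < N"
    and best: "\<forall>t'<N. norm2_vec (A *\<^sub>v sea_x A y k \<eta> (0\<^sub>v n) tb - y)
                     \<le> norm2_vec (A *\<^sub>v sea_x A y k \<eta> (0\<^sub>v n) t' - y)"
  have Z: "0\<^sub>v n \<in> carrier_vec n" by simp
  obtain s where s: "s \<le> k" "supp_vec xs \<subseteq> sea_S A y k \<eta> (0\<^sub>v n) s"
    using reach_k[OF A O xs Z eta refl card] y by blast
  have xs_s: "sea_x A y k \<eta> (0\<^sub>v n) s = xs"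
    unfolding y xx_eq[OF A O xs Z eta]
  proof (rule eq_vecI)
    fix i assume i: "i < dim_vec xs"
    show "vec n (\<lambda>i. if i \<in> sea_S A (A *\<^sub>v xs) k \<eta> (0\<^sub>v n) s then xs $ i else 0) $ i = xs $ i"
      using i xs s(2) y by (auto simp: supp_vec_def)
  qed (use xs in simp)
  have "norm2_vec (A *\<^sub>v sea_x A y k \<eta> (0\<^sub>v n) tb - y) \<le> norm2_vec (A *\<^sub>v sea_x A y k \<eta> (0\<^sub>v n) s - y)"
    using best s(1) N by simp
  also have "A *\<^sub>v sea_x A y k \<eta> (0\<^sub>v n) s - y = A *\<^sub>v xs - y"
    by (simp only: xs_s)
  also have "A *\<^sub>v xs - y = 0\<^sub>v m"
    unfolding y using A xs by (intro eq_vecI) auto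
  finally have "norm2_vec (A *\<^sub>v sea_x A y k \<eta> (0\<^sub>v n) tb - y) \<le> 0" by (simp add: norm2_zero_vec)
  then have r0': "A *\<^sub>v sea_x A y k \<eta> (0\<^sub>v n) tb - y = 0\<^sub>v (dim_vec (A *\<^sub>v sea_x A y k \<eta> (0\<^sub>v n) tb - y))"
    by (rule norm2_zero)
  have "dim_vec (A *\<^sub>v sea_x A y k \<eta> (0\<^sub>v n) tb - y) = m" using A y by simp
  with r0' have r0: "A *\<^sub>v sea_x A y k \<eta> (0\<^sub>v n) tb - y = 0\<^sub>v m" by simp
  have "vec n (\<lambda>i. if i \<in> sea_S A y k \<eta> (0\<^sub>v n) tb then 0 else - xs $ i)
      = transpose_mat A *\<^sub>v 0\<^sub>v m"
    using grad_t[OF A O xs Z eta, where t=tb and k=k] r0 y by simp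
  also have "\<dots> = 0\<^sub>v n" using A by (intro eq_vecI) auto
  finally have g: "vec n (\<lambda>i. if i \<in> sea_S A y k \<eta> (0\<^sub>v n) tb then 0 else - xs $ i) = 0\<^sub>v n" .
  have sub: "supp_vec xs \<subseteq> sea_S A y k \<eta> (0\<^sub>v n) tb"
  proof
    fix i assume iS: "i \<in> supp_vec xs"
    then have iN: "i < n" and nz: "xs $ i \<noteq> 0" using xs unfolding supp_vec_def by auto
    have "vec n (\<lambda>i. if i \<in> sea_S A y k \<eta> (0\<^sub>v n) tb then 0 else - xs $ i) $ i = 0"
      using g iN by simp
    then show "i \<in> sea_S A y k \<eta> (0\<^sub>v n) tb" using iN nz by (auto split: if_splits)
  qed
  show "supp_vec xs \<subseteq> sea_S A y k \<eta> (0\<^sub>v n) tb" by (rule sub)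
  show "sea_x A y k \<eta> (0\<^sub>v n) tb = xs"
    unfolding y xx_eq[OF A O xs Z eta]
  proof (rule eq_vecI)
    fix i assume i: "i < dim_vec xs"
    show "vec n (\<lambda>i. if i \<in> sea_S A (A *\<^sub>v xs) k \<eta> (0\<^sub>v n) tb then xs $ i else 0) $ i = xs $ i"
      using i xs sub y by (auto simp: supp_vec_def)
  qed (use xs in simp)
qed

end
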